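(* For every prime $p$, the polynomial ring $\mathbb{Z}_p[x]$ in one variable over the prime field $\mathbb{Z}_p$ is finitely separable.
   Context: A ring $R$ is finitely separable if for every $r\in R$ and every subring $A\subseteq R$ (not necessarily containing $1$) with $r\notin A$ there exist a finite ring $F$ and a ring homomorphism $\varphi:R\to F$ with $\varphi(r)\notin\varphi(A)$. *)

theory Defs
  imports "HOL-Algebra.Algebra" "HOL-Number_Theory.Residues"
begin

definition nonunital_subring :: "'a set \<Rightarrow> ('a, 'm) ring_scheme \<Rightarrow> bool" where
  "nonunital_subring A R \<longleftrightarrow> A \<subseteq> carrier R \<and> additive_subgroup A R \<and>
     (\<forall>x\<in>A. \<forall>y\<in>A. x \<otimes>\<^bsub>R\<^esub> y \<in> A)"

text \<open>Finitely separable ring. Finite target rings are represented with carriers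
  of type nat; every finite ring is isomorphic to such a ring.\<close>
definition finitely_separable :: "('a, 'm) ring_scheme \<Rightarrow> bool" where
  "finitely_separable R \<longleftrightarrow>
     (\<forall>r\<in>carrier R. \<forall>A. nonunital_subring A R \<and> r \<notin> A \<longrightarrow>
        (\<exists>(F :: nat ring) \<phi>. ring F \<and> finite (carrier F) \<and> \<phi> \<in> ring_hom R F \<and>
            \<phi> r \<notin> \<phi> ` A))"

end

theory Submission
  imports Defs
begin


lemma nat_transport:
  fixes Q :: "('b, 'm) ring_scheme"
  assumes rQ: "ring Q" and fQ: "finite (carrier Q)"
  shows "\<exists>(F::nat ring) \<beta>. ring F \<and> finite (carrier F) \<and> \<beta> \<in> ring_hom Q F \<and> inj_on \<beta> (carrier Q)"
proof -
  obtain \<beta> and n :: nat where b1: "\<beta> ` carrier Q = {i. i<n}" and inj: "inj_on \<beta> (carrier Q)"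
    using finite_imp_inj_to_nat_seg[OF fQ] by blast
  let ?i = "inv_into (carrier Q) \<beta>"
  define F :: "nat ring" where "F = \<lparr>carrier = \<beta> ` carrier Q,
     monoid.mult = (\<lambda>x y. \<beta> (inv_into (carrier Q) \<beta> x \<otimes>\<^bsub>Q\<^esub> inv_into (carrier Q) \<beta> y)), one = \<beta> \<one>\<^bsub>Q\<^esub>, ring.zero = \<beta> \<zero>\<^bsub>Q\<^esub>,
     ring.add = (\<lambda>x y. \<beta> (inv_into (carrier Q) \<beta> x \<oplus>\<^bsub>Q\<^esub> inv_into (carrier Q) \<beta> y))\<rparr>"
  interpret Q: ring Q by fact
  have iso: "\<beta> \<in> ring_iso Q F"
    unfolding ring_iso_def
  proof (intro CollectI conjI)
    show "\<beta> \<in> ring_hom Q F"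
      by (rule ring_hom_memI) (auto simp: F_def inv_into_f_f[OF inj])
    show "bij_betw \<beta> (carrier Q) (carrier F)"
      using inj by (simp add: F_def bij_betw_def)
  qed
  have "ring (F\<lparr>zero := \<beta> \<zero>\<^bsub>Q\<^esub>\<rparr>)" by (rule Q.ring_iso_imp_img_ring[OF iso])
  moreover have "F\<lparr>zero := \<beta> \<zero>\<^bsub>Q\<^esub>\<rparr> = F" by (simp add: F_def)
  ultimately have "ring F" by simp
  moreover have "finite (carrier F)" using fQ by (simp add: F_def)
  ultimately show ?thesis using iso inj unfolding ring_iso_def by blast
qed


locale fsep = UP_domain +
  assumes fld: "field R" and finR: "finite (carrier R)"
      and prim: "\<And>x. x \<in> carrier R \<Longrightarrow> \<exists>n::nat. x = [n] \<cdot> \<one>"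
begin

lemma low_finite: "finite {w \<in> carrier P. deg R w \<le> k}"
proof -
  let ?L = "{w \<in> carrier P. deg R w \<le> k}"
  let ?h = "\<lambda>w. restrict (UnivPoly.coeff P w) {..k}"
  have "inj_on ?h ?L"
  proof (rule inj_onI)
    fix v w assume v: "v \<in> ?L" and w: "w \<in> ?L" and e: "?h v = ?h w"
    show "v = w"
    proof (rule up_eqI)
      fix n show "UnivPoly.coeff P v n = UnivPoly.coeff P w n"
      proof (cases "n \<le> k")
        case True then show ?thesis using fun_cong[OF e, of n] by simp
      next
        case False then show ?thesis using v w deg_aboveD[of v n] deg_aboveD[of w n] by auto
      qed
    qed (use v w in auto)
  qed
  moreover have "?h ` ?L \<subseteq> PiE {..k} (\<lambda>_. carrier R)" by (auto simp: PiE_iff extensional_def split: if_splits)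
  moreover have "finite (PiE {..k} (\<lambda>_. carrier R))" using finR by (simp add: finite_PiE)
  ultimately show ?thesis by (meson finite_imageD finite_subset)
qed

lemma quot_sep:
  assumes f: "f \<in> carrier P" "f \<noteq> \<zero>\<^bsub>P\<^esub>" and r: "r \<in> carrier P"
    and nr: "\<forall>a\<in>A. \<forall>m\<in>carrier P. r \<noteq> a \<oplus>\<^bsub>P\<^esub> f \<otimes>\<^bsub>P\<^esub> m"
    and AP: "A \<subseteq> carrier P"
  shows "\<exists>(F::nat ring) \<phi>. ring F \<and> finite (carrier F) \<and> \<phi> \<in> ring_hom P F \<and> \<phi> r \<notin> \<phi> ` A"
proof -
  interpret F: field R by (rule fld)
  let ?I = "PIdl\<^bsub>P\<^esub> f"
  have idl: "ideal ?I P" by (rule P.cgenideal_ideal[OF f(1)])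
  interpret I: ideal ?I P by (rule idl)
  have rem: "\<exists>u\<in>carrier P. deg R u \<le> deg R f \<and> ?I +>\<^bsub>P\<^esub> u = ?I +>\<^bsub>P\<^esub> w" if w: "w \<in> carrier P" for w
  proof -
    obtain q r0 k where q: "q \<in> carrier P" and r0: "r0 \<in> carrier P"
       and eq: "lcoeff f [^] (k::nat) \<odot>\<^bsub>P\<^esub> w = f \<otimes>\<^bsub>P\<^esub> q \<oplus>\<^bsub>P\<^esub> r0" and dr: "r0 = \<zero>\<^bsub>P\<^esub> \<or> deg R r0 < deg R f"
      using long_div_theorem[OF f(1) w f(2)] by blast
    define c where "c = lcoeff f [^] k"
    have lc: "lcoeff f \<in> carrier R" "lcoeff f \<noteq> \<zero>" using f lcoeff_nonzero by auto
    have c: "c \<in> carrier R" "c \<noteq> \<zero>" unfolding c_def using lc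
      by (auto, induct k, auto simp: R.integral_iff)
    have ci: "inv c \<in> carrier R" "inv c \<otimes> c = \<one>" using c F.field_Units by auto
    define u where "u = inv c \<odot>\<^bsub>P\<^esub> r0"
    have u: "u \<in> carrier P" using ci r0 by (simp add: u_def)
    have "w = inv c \<odot>\<^bsub>P\<^esub> (c \<odot>\<^bsub>P\<^esub> w)"
      using ci c w by (simp add: UP_smult_assoc1[symmetric])
    also have "\<dots> = f \<otimes>\<^bsub>P\<^esub> (inv c \<odot>\<^bsub>P\<^esub> q) \<oplus>\<^bsub>P\<^esub> u"
    proof -
      have "f \<otimes>\<^bsub>P\<^esub> (inv c \<odot>\<^bsub>P\<^esub> q) = inv c \<odot>\<^bsub>P\<^esub> (f \<otimes>\<^bsub>P\<^esub> q)"
        using ci q f by (metis P.m_comm UP_smult_assoc2 UP_smult_closed)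
      then show ?thesis using eq ci q r0 f unfolding c_def[symmetric] u_def
        by (simp add: UP_smult_r_distr)
    qed
    finally have weq: "w = f \<otimes>\<^bsub>P\<^esub> (inv c \<odot>\<^bsub>P\<^esub> q) \<oplus>\<^bsub>P\<^esub> u" .
    have "w \<ominus>\<^bsub>P\<^esub> u = (inv c \<odot>\<^bsub>P\<^esub> q) \<otimes>\<^bsub>P\<^esub> f"
    proof -
      have cq: "inv c \<odot>\<^bsub>P\<^esub> q \<in> carrier P" using ci q by simp
      show ?thesis using weq f cq u by (simp add: P.m_comm P.a_assoc P.minus_eq P.r_neg)
    qed
    hence "w \<ominus>\<^bsub>P\<^esub> u \<in> ?I" using ci q unfolding cgenideal_def by auto
    hence "w \<in> ?I +>\<^bsub>P\<^esub> u" using I.a_rcos_module_minus[OF P.ring_axioms u w] by simp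
    hence "?I +>\<^bsub>P\<^esub> u = ?I +>\<^bsub>P\<^esub> w" using I.a_repr_independence' u by blast
    moreover have "deg R u \<le> deg R f" using dr ci r0 by (auto simp: u_def)
    ultimately show ?thesis using u by blast
  qed
  have "carrier (P Quot ?I) \<subseteq> (\<lambda>u. ?I +>\<^bsub>P\<^esub> u) ` {w \<in> carrier P. deg R w \<le> deg R f}"
  proof
    fix Y assume "Y \<in> carrier (P Quot ?I)"
    then obtain w where w: "w \<in> carrier P" "Y = ?I +>\<^bsub>P\<^esub> w"
      unfolding FactRing_def A_RCOSETS_def' by auto
    then show "Y \<in> (\<lambda>u. ?I +>\<^bsub>P\<^esub> u) ` {w \<in> carrier P. deg R w \<le> deg R f}"
    proof -
      obtain u where "u \<in> carrier P" "deg R u \<le> deg R f" "?I +>\<^bsub>P\<^esub> u = ?I +>\<^bsub>P\<^esub> w"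
        using rem[OF w(1)] by blast
      then show ?thesis using w(2) by (intro image_eqI[of _ _ u]) auto
    qed
  qed
  hence finQ: "finite (carrier (P Quot ?I))" using low_finite finite_surj by blast
  obtain F :: "nat ring" and \<beta> where F: "ring F" "finite (carrier F)" and bh: "\<beta> \<in> ring_hom (P Quot ?I) F"
    and binj: "inj_on \<beta> (carrier (P Quot ?I))"
    using nat_transport[OF I.quotient_is_ring finQ] by blast
  have hom: "\<beta> \<circ> (\<lambda>u. ?I +>\<^bsub>P\<^esub> u) \<in> ring_hom P F"
    by (rule ring_hom_trans[OF I.rcos_ring_hom bh])
  moreover have "(\<beta> \<circ> (\<lambda>u. ?I +>\<^bsub>P\<^esub> u)) r \<notin> (\<beta> \<circ> (\<lambda>u. ?I +>\<^bsub>P\<^esub> u)) ` A"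
  proof
    assume "(\<beta> \<circ> (\<lambda>u. ?I +>\<^bsub>P\<^esub> u)) r \<in> (\<beta> \<circ> (\<lambda>u. ?I +>\<^bsub>P\<^esub> u)) ` A"
    then obtain a where a: "a \<in> A" and e: "\<beta> (?I +>\<^bsub>P\<^esub> r) = \<beta> (?I +>\<^bsub>P\<^esub> a)" by auto
    have aP: "a \<in> carrier P" using a AP by auto
    have "?I +>\<^bsub>P\<^esub> r \<in> carrier (P Quot ?I)" "?I +>\<^bsub>P\<^esub> a \<in> carrier (P Quot ?I)"
      using ring_hom_closed[OF I.rcos_ring_hom] r aP by auto
    hence "?I +>\<^bsub>P\<^esub> r = ?I +>\<^bsub>P\<^esub> a" using binj e inj_on_def by metis
    hence "r \<in> ?I +>\<^bsub>P\<^esub> a" using I.a_rcos_self[OF r] by simp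
    hence "r \<ominus>\<^bsub>P\<^esub> a \<in> ?I" using I.a_rcos_module_minus[OF P.ring_axioms aP r] by simp
    then obtain x where x: "x \<in> carrier P" "r \<ominus>\<^bsub>P\<^esub> a = x \<otimes>\<^bsub>P\<^esub> f" unfolding cgenideal_def by auto
    have "r = a \<oplus>\<^bsub>P\<^esub> f \<otimes>\<^bsub>P\<^esub> x"
    proof -
      have "r = a \<oplus>\<^bsub>P\<^esub> (r \<ominus>\<^bsub>P\<^esub> a)" using r aP by algebra
      thus ?thesis using x f by (simp add: P.m_comm)
    qed
    thus False using nr a x by blast
  qed
  ultimately show ?thesis using F by blast
qed

end



primrec qs :: "('p, 'm) ring_scheme \<Rightarrow> 'p \<Rightarrow> (nat \<Rightarrow> 'p) \<Rightarrow> nat \<Rightarrow> 'p" where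
  "qs P g s 0 = \<zero>\<^bsub>P\<^esub>"
| "qs P g s (Suc J) = qs P g s J \<oplus>\<^bsub>P\<^esub> (g [^]\<^bsub>P\<^esub> J \<otimes>\<^bsub>P\<^esub> s J)"

context fsep
begin

lemmas Pint = domain.integral_iff[OF UP_domain]

lemma deg_add_less:
  assumes p: "p \<in> carrier P" and q: "q \<in> carrier P" and lt: "deg R p < deg R q"
  shows "deg R (p \<oplus>\<^bsub>P\<^esub> q) = deg R q"
proof (rule le_antisym)
  show "deg R (p \<oplus>\<^bsub>P\<^esub> q) \<le> deg R q" using deg_add[OF p q] lt by simp
  have qz: "q \<noteq> \<zero>\<^bsub>P\<^esub>" using lt by auto
  have "UnivPoly.coeff P (p \<oplus>\<^bsub>P\<^esub> q) (deg R q) = UnivPoly.coeff P q (deg R q)"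
    using p q lt deg_aboveD[OF lt p] by simp
  then show "deg R q \<le> deg R (p \<oplus>\<^bsub>P\<^esub> q)"
    using lcoeff_nonzero[OF qz q] p q by (intro deg_belowI) auto
qed

lemma coeff_add_pow: fixes n :: nat shows "t \<in> carrier P \<Longrightarrow> UnivPoly.coeff P ([n] \<cdot>\<^bsub>P\<^esub> t) k = [n] \<cdot> UnivPoly.coeff P t k"
  by (induct n) (auto simp: P.add.nat_pow_Suc R.add.nat_pow_Suc)

lemma add_pow_set:
  fixes n :: nat
  assumes "\<zero>\<^bsub>P\<^esub> \<in> XX" "\<And>x y. x \<in> XX \<Longrightarrow> y \<in> XX \<Longrightarrow> x \<oplus>\<^bsub>P\<^esub> y \<in> XX" "t \<in> XX"
  shows "[n] \<cdot>\<^bsub>P\<^esub> t \<in> XX"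
  using assms by (induct n) (auto simp: P.add.nat_pow_Suc)

lemma scale_lead:
  assumes t: "t \<in> carrier P" "t \<noteq> \<zero>\<^bsub>P\<^esub>" and lam: "lam \<in> carrier R"
  shows "\<exists>n::nat. UnivPoly.coeff P ([n] \<cdot>\<^bsub>P\<^esub> t) (deg R t) = lam \<and> deg R ([n] \<cdot>\<^bsub>P\<^esub> t) \<le> deg R t"
proof -
  interpret F: field R by (rule fld)
  let ?mu = "UnivPoly.coeff P t (deg R t)"
  have mu: "?mu \<in> carrier R" "?mu \<noteq> \<zero>" using t lcoeff_nonzero by auto
  have mi: "inv ?mu \<in> carrier R" "inv ?mu \<otimes> ?mu = \<one>" using mu F.field_Units by auto
  obtain n :: nat where n: "lam \<otimes> inv ?mu = [n] \<cdot> \<one>" using prim[of "lam \<otimes> inv ?mu"] lam mi by auto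
  have "UnivPoly.coeff P ([n] \<cdot>\<^bsub>P\<^esub> t) (deg R t) = [n] \<cdot> ?mu" using coeff_add_pow[OF t(1)] by simp
  also have "\<dots> = ([n] \<cdot> \<one>) \<otimes> ?mu" using mu by (simp add: R.add_pow_ldistr)
  also have "\<dots> = lam" using n mi mu lam by (metis R.m_assoc R.r_one)
  finally have c: "UnivPoly.coeff P ([n] \<cdot>\<^bsub>P\<^esub> t) (deg R t) = lam" .
  have "deg R ([n] \<cdot>\<^bsub>P\<^esub> t) \<le> deg R t"
  proof (rule deg_aboveI)
    fix m assume "deg R t < m"
    then show "UnivPoly.coeff P ([n] \<cdot>\<^bsub>P\<^esub> t) m = \<zero>" using coeff_add_pow[OF t(1)] deg_aboveD[of t m] t
      by (simp add: R.add.nat_pow_one)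
  qed (use t in simp)
  with c show ?thesis by blast
qed

end

locale fsep_g = fsep +
  fixes A and g
  assumes sub: "nonunital_subring A P" and gA: "g \<in> A" and dpos: "0 < deg R g"
begin

lemma A_sub: "A \<subseteq> carrier P" and A_add: "a \<in> A \<Longrightarrow> b \<in> A \<Longrightarrow> a \<oplus>\<^bsub>P\<^esub> b \<in> A"
  and A_zero: "\<zero>\<^bsub>P\<^esub> \<in> A" and A_neg: "a \<in> A \<Longrightarrow> \<ominus>\<^bsub>P\<^esub> a \<in> A"
  and A_mult: "a \<in> A \<Longrightarrow> b \<in> A \<Longrightarrow> a \<otimes>\<^bsub>P\<^esub> b \<in> A"
  using sub unfolding nonunital_subring_def
  by (auto intro: additive_subgroup.a_closed additive_subgroup.a_inv_closed additive_subgroup.zero_closed)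

lemma A_carr: "a \<in> A \<Longrightarrow> a \<in> carrier P" using A_sub by auto

lemma A_minus: "a \<in> A \<Longrightarrow> b \<in> A \<Longrightarrow> a \<ominus>\<^bsub>P\<^esub> b \<in> A"
  by (simp add: P.minus_eq A_add A_neg)

lemma g_carr: "g \<in> carrier P" using gA A_carr by auto
lemma g_nz: "g \<noteq> \<zero>\<^bsub>P\<^esub>" using dpos by auto

lemma gpow_carr: "g [^]\<^bsub>P\<^esub> (j::nat) \<in> carrier P" using g_carr by simp

lemma gpow_nz: "g [^]\<^bsub>P\<^esub> (j::nat) \<noteq> \<zero>\<^bsub>P\<^esub>"
  by (induct j) (auto simp: Pint g_carr g_nz)

lemma gpow_deg: "deg R (g [^]\<^bsub>P\<^esub> (j::nat)) = j * deg R g"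
  by (induct j) (auto simp: gpow_nz g_carr g_nz)

lemma gpow_A: "a \<in> A \<Longrightarrow> g [^]\<^bsub>P\<^esub> (j::nat) \<otimes>\<^bsub>P\<^esub> a \<in> A"
proof (induct j arbitrary: a)
  case 0 then show ?case by (simp add: A_carr)
next
  case (Suc j)
  have "g [^]\<^bsub>P\<^esub> Suc j \<otimes>\<^bsub>P\<^esub> a = g [^]\<^bsub>P\<^esub> j \<otimes>\<^bsub>P\<^esub> (g \<otimes>\<^bsub>P\<^esub> a)"
    using Suc.prems by (simp add: P.m_assoc A_carr g_carr)
  then show ?case using Suc A_mult gA by simp
qed

lemma S_shift:
  assumes "a \<in> A" "a \<noteq> \<zero>\<^bsub>P\<^esub>"
  shows "\<exists>a'\<in>A. a' \<noteq> \<zero>\<^bsub>P\<^esub> \<and> deg R a' = deg R a + k * deg R g"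
proof -
  have "g [^]\<^bsub>P\<^esub> k \<otimes>\<^bsub>P\<^esub> a \<noteq> \<zero>\<^bsub>P\<^esub>" using assms gpow_nz gpow_carr A_carr by (simp add: Pint)
  moreover have "deg R (g [^]\<^bsub>P\<^esub> k \<otimes>\<^bsub>P\<^esub> a) = deg R a + k * deg R g"
    using assms gpow_nz gpow_carr A_carr gpow_deg by simp
  ultimately show ?thesis using gpow_A[OF assms(1)] by blast
qed

definition Cs :: "nat set" where
  "Cs = {c. c < deg R g \<and> (\<forall>a\<in>A. a \<noteq> \<zero>\<^bsub>P\<^esub> \<longrightarrow> deg R a mod deg R g \<noteq> c)}"

lemma threshold: "\<exists>E>0. \<forall>e\<ge>E. e mod deg R g \<notin> Cs \<longrightarrow> (\<exists>a\<in>A. a \<noteq> \<zero>\<^bsub>P\<^esub> \<and> deg R a = e)"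
proof -
  let ?d = "deg R g"
  have "\<forall>c. \<exists>a. c < ?d \<and> c \<notin> Cs \<longrightarrow> a \<in> A \<and> a \<noteq> \<zero>\<^bsub>P\<^esub> \<and> deg R a mod ?d = c"
    unfolding Cs_def by blast
  then obtain sa where sa: "\<And>c. c < ?d \<Longrightarrow> c \<notin> Cs \<Longrightarrow> sa c \<in> A \<and> sa c \<noteq> \<zero>\<^bsub>P\<^esub> \<and> deg R (sa c) mod ?d = c"
    by metis
  define E where "E = Suc (\<Sum>c<?d. deg R (sa c))"
  have "\<forall>e\<ge>E. e mod ?d \<notin> Cs \<longrightarrow> (\<exists>a\<in>A. a \<noteq> \<zero>\<^bsub>P\<^esub> \<and> deg R a = e)"
  proof (intro allI impI)
    fix e assume e: "E \<le> e" and nc: "e mod ?d \<notin> Cs"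
    let ?c = "e mod ?d"
    have cd: "?c < ?d" using dpos by simp
    have s: "sa ?c \<in> A" "sa ?c \<noteq> \<zero>\<^bsub>P\<^esub>" "deg R (sa ?c) mod ?d = ?c" using sa[OF cd nc] by auto
    have "deg R (sa ?c) \<le> (\<Sum>c<?d. deg R (sa c))"
      using cd by (intro member_le_sum) auto
    hence le: "deg R (sa ?c) \<le> e" using e unfolding E_def by simp
    have "?d dvd e - deg R (sa ?c)" using s(3) mod_eq_dvd_iff_nat[OF le, of ?d] by simp
    then obtain k where k: "e - deg R (sa ?c) = ?d * k" by (auto elim: dvdE)
    hence "e = deg R (sa ?c) + k * ?d" using le by (simp add: mult.commute)
    then show "\<exists>a\<in>A. a \<noteq> \<zero>\<^bsub>P\<^esub> \<and> deg R a = e" using S_shift[OF s(1,2), of k] by simp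
  qed
  moreover have "E > 0" unfolding E_def by simp
  ultimately show ?thesis by blast
qed

definition Scs where
  "Scs = {u \<in> carrier P. \<forall>e. UnivPoly.coeff P u e \<noteq> \<zero> \<longrightarrow> e \<in> Cs}"

lemma Scs_zero: "\<zero>\<^bsub>P\<^esub> \<in> Scs" unfolding Scs_def by simp

lemma Scs_add: assumes "u \<in> Scs" "v \<in> Scs" shows "u \<oplus>\<^bsub>P\<^esub> v \<in> Scs"
proof -
  have u: "u \<in> carrier P" "\<And>e. UnivPoly.coeff P u e \<noteq> \<zero> \<Longrightarrow> e \<in> Cs" using assms(1) unfolding Scs_def by auto
  have v: "v \<in> carrier P" "\<And>e. UnivPoly.coeff P v e \<noteq> \<zero> \<Longrightarrow> e \<in> Cs" using assms(2) unfolding Scs_def by auto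
  have "e \<in> Cs" if ne: "UnivPoly.coeff P (u \<oplus>\<^bsub>P\<^esub> v) e \<noteq> \<zero>" for e
  proof (rule ccontr)
    assume "e \<notin> Cs"
    then have "UnivPoly.coeff P u e = \<zero>" "UnivPoly.coeff P v e = \<zero>" using u v by blast+
    then show False using ne u v by simp
  qed
  then show ?thesis unfolding Scs_def using u v by simp
qed

lemma Scs_neg: assumes "u \<in> Scs" shows "\<ominus>\<^bsub>P\<^esub> u \<in> Scs"
proof -
  have u: "u \<in> carrier P" "\<And>e. UnivPoly.coeff P u e \<noteq> \<zero> \<Longrightarrow> e \<in> Cs" using assms(1) unfolding Scs_def by auto
  have "e \<in> Cs" if ne: "UnivPoly.coeff P (\<ominus>\<^bsub>P\<^esub> u) e \<noteq> \<zero>" for e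
  proof (rule ccontr)
    assume "e \<notin> Cs"
    then have "UnivPoly.coeff P u e = \<zero>" using u by blast
    then show False using ne u by simp
  qed
  then show ?thesis unfolding Scs_def using u by simp
qed

lemma Scs_monom: "c \<in> Cs \<Longrightarrow> lam \<in> carrier R \<Longrightarrow> UnivPoly.monom P lam c \<in> Scs"
  unfolding Scs_def by auto

lemma Scs_carr: "u \<in> Scs \<Longrightarrow> u \<in> carrier P" unfolding Scs_def by auto

lemma Scs_deg: "u \<in> Scs \<Longrightarrow> u \<noteq> \<zero>\<^bsub>P\<^esub> \<Longrightarrow> deg R u \<in> Cs"
  unfolding Scs_def using lcoeff_nonzero by auto

lemma Cs_lt: "c \<in> Cs \<Longrightarrow> c < deg R g" unfolding Cs_def by auto

abbreviation "qq \<equiv> qs P g"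

lemma qs_closed: "(\<And>j. s j \<in> carrier P) \<Longrightarrow> qq s J \<in> carrier P"
  by (induct J) (auto simp: g_carr)

lemma add4: "a \<in> carrier P \<Longrightarrow> b \<in> carrier P \<Longrightarrow> c \<in> carrier P \<Longrightarrow> e \<in> carrier P \<Longrightarrow>
   (a \<oplus>\<^bsub>P\<^esub> b) \<oplus>\<^bsub>P\<^esub> (c \<oplus>\<^bsub>P\<^esub> e) = (a \<oplus>\<^bsub>P\<^esub> c) \<oplus>\<^bsub>P\<^esub> (b \<oplus>\<^bsub>P\<^esub> e)"
  by (metis P.a_assoc P.a_lcomm P.add.m_closed)

lemma qs_add: "(\<And>j. s j \<in> carrier P) \<Longrightarrow> (\<And>j. t j \<in> carrier P) \<Longrightarrow>
   qq s J \<oplus>\<^bsub>P\<^esub> qq t J = qq (\<lambda>j. s j \<oplus>\<^bsub>P\<^esub> t j) J"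
proof (induct J)
  case 0 then show ?case by simp
next
  case (Suc J)
  have c: "qq s J \<in> carrier P" "qq t J \<in> carrier P" using Suc.prems qs_closed by auto
  have "qq s (Suc J) \<oplus>\<^bsub>P\<^esub> qq t (Suc J) =
    (qq s J \<oplus>\<^bsub>P\<^esub> qq t J) \<oplus>\<^bsub>P\<^esub> (g [^]\<^bsub>P\<^esub> J \<otimes>\<^bsub>P\<^esub> s J \<oplus>\<^bsub>P\<^esub> g [^]\<^bsub>P\<^esub> J \<otimes>\<^bsub>P\<^esub> t J)"
    using c Suc.prems gpow_carr by (simp add: add4)
  then show ?case using Suc gpow_carr by (simp add: P.r_distr)
qed

lemma qs_neg: "(\<And>j. s j \<in> carrier P) \<Longrightarrow> \<ominus>\<^bsub>P\<^esub> qq s J = qq (\<lambda>j. \<ominus>\<^bsub>P\<^esub> s j) J"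
proof (induct J)
  case 0 then show ?case by simp
next
  case (Suc J)
  have c: "qq s J \<in> carrier P" using Suc.prems qs_closed by auto
  show ?case using Suc c gpow_carr by (simp add: P.minus_add P.r_minus)
qed

lemma qs_cong: "(\<And>j. j < J \<Longrightarrow> s j = t j) \<Longrightarrow> qq s J = qq t J"
  by (induct J) auto

lemma qs_ext: "(\<And>j. s j \<in> carrier P) \<Longrightarrow> (\<And>j. J \<le> j \<Longrightarrow> s j = \<zero>\<^bsub>P\<^esub>) \<Longrightarrow> qq s (J + k) = qq s J"
proof (induct k)
  case 0 then show ?case by simp
next
  case (Suc k)
  then show ?case using qs_closed[of s "J + k"] gpow_carr by simp
qed

lemma qs_g: "(\<And>j. s j \<in> carrier P) \<Longrightarrow>
   g \<otimes>\<^bsub>P\<^esub> qq s J = qq (\<lambda>j. if j = 0 then \<zero>\<^bsub>P\<^esub> else s (j - 1)) (Suc J)"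
proof (induct J)
  case 0 then show ?case using g_carr by simp
next
  case (Suc J)
  have c: "qq s J \<in> carrier P" using Suc.prems qs_closed by auto
  have "g \<otimes>\<^bsub>P\<^esub> qq s (Suc J) = g \<otimes>\<^bsub>P\<^esub> qq s J \<oplus>\<^bsub>P\<^esub> g \<otimes>\<^bsub>P\<^esub> (g [^]\<^bsub>P\<^esub> J \<otimes>\<^bsub>P\<^esub> s J)"
    using c Suc.prems gpow_carr g_carr by (simp add: P.r_distr)
  also have "g \<otimes>\<^bsub>P\<^esub> (g [^]\<^bsub>P\<^esub> J \<otimes>\<^bsub>P\<^esub> s J) = g [^]\<^bsub>P\<^esub> Suc J \<otimes>\<^bsub>P\<^esub> s J"
    using Suc.prems gpow_carr g_carr by (metis P.m_assoc P.nat_pow_Suc2)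
  finally show ?case using Suc by simp
qed

lemma qs_deg:
  assumes "\<And>j. s j \<in> Scs"
  shows "qq s J = \<zero>\<^bsub>P\<^esub> \<or> (deg R (qq s J) < J * deg R g \<and> deg R (qq s J) mod deg R g \<in> Cs)"
proof (induct J)
  case 0 then show ?case by simp
next
  case (Suc J)
  have sc: "s J \<in> carrier P" using assms Scs_carr by auto
  have c: "qq s J \<in> carrier P" using assms Scs_carr qs_closed by auto
  show ?case
  proof (cases "s J = \<zero>\<^bsub>P\<^esub>")
    case True
    then show ?thesis using Suc c gpow_carr by auto
  next
    case False
    let ?t = "g [^]\<^bsub>P\<^esub> J \<otimes>\<^bsub>P\<^esub> s J"
    have dsJ: "deg R (s J) \<in> Cs" using Scs_deg assms False by auto
    hence lt: "deg R (s J) < deg R g" using Cs_lt by auto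
    have dt: "deg R ?t = J * deg R g + deg R (s J)" using False sc gpow_nz gpow_carr gpow_deg by simp
    have tc: "?t \<in> carrier P" using sc gpow_carr by simp
    have tnz: "?t \<noteq> \<zero>\<^bsub>P\<^esub>" using False sc gpow_nz gpow_carr by (simp add: Pint)
    have dtm: "deg R ?t mod deg R g = deg R (s J)" using dt lt by simp
    have dts: "deg R ?t < Suc J * deg R g" using dt lt by simp
    have "deg R (qq s J \<oplus>\<^bsub>P\<^esub> ?t) = deg R ?t"
    proof (cases "qq s J = \<zero>\<^bsub>P\<^esub>")
      case True then show ?thesis using tc by simp
    next
      case False
      then have "deg R (qq s J) < J * deg R g" using Suc by auto
      then show ?thesis using dt c tc by (intro deg_add_less) auto
    qed
    then show ?thesis using dtm dts dsJ by simp
  qed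
qed

definition Q where "Q = {w. \<exists>s J. (\<forall>j. s j \<in> Scs) \<and> w = qq s J}"

lemma Q_intro: "(\<And>j. s j \<in> Scs) \<Longrightarrow> qq s J \<in> Q"
  unfolding Q_def by blast

lemma Q_carr: "w \<in> Q \<Longrightarrow> w \<in> carrier P"
  unfolding Q_def using qs_closed Scs_carr by blast

lemma Q_zero: "\<zero>\<^bsub>P\<^esub> \<in> Q"
  unfolding Q_def by (rule CollectI, rule exI[of _ "\<lambda>_. \<zero>\<^bsub>P\<^esub>"], rule exI[of _ 0]) (simp add: Scs_zero)

lemma Q_deg: "w \<in> Q \<Longrightarrow> w \<noteq> \<zero>\<^bsub>P\<^esub> \<Longrightarrow> deg R w mod deg R g \<in> Cs"
  unfolding Q_def using qs_deg by blast

lemma Q_neg: assumes "w \<in> Q" shows "\<ominus>\<^bsub>P\<^esub> w \<in> Q"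
proof -
  obtain s J where s: "\<And>j. s j \<in> Scs" "w = qq s J" using assms(1) unfolding Q_def by blast
  have "\<ominus>\<^bsub>P\<^esub> w = qq (\<lambda>j. \<ominus>\<^bsub>P\<^esub> s j) J" using s qs_neg Scs_carr by blast
  moreover have "qq (\<lambda>j. \<ominus>\<^bsub>P\<^esub> s j) J \<in> Q" using s Scs_neg by (intro Q_intro) auto
  ultimately show ?thesis by simp
qed

lemma Q_add: assumes "w \<in> Q" "v \<in> Q" shows "w \<oplus>\<^bsub>P\<^esub> v \<in> Q"
proof -
  obtain s J where s: "\<And>j. s j \<in> Scs" "w = qq s J" using assms(1) unfolding Q_def by blast
  obtain t K where t: "\<And>j. t j \<in> Scs" "v = qq t K" using assms(2) unfolding Q_def by blast
  define s1 where "s1 = (\<lambda>j. if j < J then s j else \<zero>\<^bsub>P\<^esub>)"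
  define t1 where "t1 = (\<lambda>j. if j < K then t j else \<zero>\<^bsub>P\<^esub>)"
  have s1: "\<And>j. s1 j \<in> Scs" "\<And>j. s1 j \<in> carrier P" using s(1) Scs_zero Scs_carr unfolding s1_def by auto
  have t1: "\<And>j. t1 j \<in> Scs" "\<And>j. t1 j \<in> carrier P" using t(1) Scs_zero Scs_carr unfolding t1_def by auto
  have "qq s J = qq s1 J" by (rule qs_cong) (simp add: s1_def)
  moreover have "qq s1 (J + (max J K - J)) = qq s1 J" by (rule qs_ext[OF s1(2)]) (simp add: s1_def)
  ultimately have w: "w = qq s1 (max J K)" using s(2) by simp
  have "qq t K = qq t1 K" by (rule qs_cong) (simp add: t1_def)
  moreover have "qq t1 (K + (max J K - K)) = qq t1 K" by (rule qs_ext[OF t1(2)]) (simp add: t1_def)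
  ultimately have v: "v = qq t1 (max J K)" using t(2) by simp
  have "w \<oplus>\<^bsub>P\<^esub> v = qq (\<lambda>j. s1 j \<oplus>\<^bsub>P\<^esub> t1 j) (max J K)" using w v qs_add s1 t1 by simp
  moreover have "qq (\<lambda>j. s1 j \<oplus>\<^bsub>P\<^esub> t1 j) (max J K) \<in> Q" using s1 t1 Scs_add by (intro Q_intro) auto
  ultimately show ?thesis by simp
qed

lemma Q_minus: "w \<in> Q \<Longrightarrow> v \<in> Q \<Longrightarrow> w \<ominus>\<^bsub>P\<^esub> v \<in> Q"
  by (simp add: P.minus_eq Q_add Q_neg)

lemma Q_g: assumes "w \<in> Q" shows "g \<otimes>\<^bsub>P\<^esub> w \<in> Q"
proof -
  obtain s J where s: "\<And>j. s j \<in> Scs" "w = qq s J" using assms(1) unfolding Q_def by blast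
  have "g \<otimes>\<^bsub>P\<^esub> w = qq (\<lambda>j. if j = 0 then \<zero>\<^bsub>P\<^esub> else s (j - 1)) (Suc J)"
    using s qs_g Scs_carr by blast
  moreover have "qq (\<lambda>j. if j = 0 then \<zero>\<^bsub>P\<^esub> else s (j - 1)) (Suc J) \<in> Q" using s Scs_zero by (intro Q_intro) auto
  ultimately show ?thesis by simp
qed

lemma Q_gpow: "w \<in> Q \<Longrightarrow> g [^]\<^bsub>P\<^esub> (j::nat) \<otimes>\<^bsub>P\<^esub> w \<in> Q"
proof (induct j arbitrary: w)
  case 0 then show ?case by (simp add: Q_carr)
next
  case (Suc j)
  have "g [^]\<^bsub>P\<^esub> Suc j \<otimes>\<^bsub>P\<^esub> w = g [^]\<^bsub>P\<^esub> j \<otimes>\<^bsub>P\<^esub> (g \<otimes>\<^bsub>P\<^esub> w)"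
    using Suc.prems Q_carr g_carr by (metis P.m_assoc P.nat_pow_Suc P.nat_pow_closed)
  then show ?case using Suc Q_g by simp
qed

lemma Q_monom: assumes "c \<in> Cs" "lam \<in> carrier R" shows "UnivPoly.monom P lam c \<in> Q"
proof -
  let ?s = "\<lambda>j. if j = 0 then UnivPoly.monom P lam c else \<zero>\<^bsub>P\<^esub>"
  have "qq ?s 1 \<in> Q" using Scs_monom[OF assms] Scs_zero by (intro Q_intro) auto
  moreover have "qq ?s 1 = UnivPoly.monom P lam c" using assms g_carr by simp
  ultimately show ?thesis by simp
qed

lemma rearr1: "a \<in> carrier P \<Longrightarrow> q \<in> carrier P \<Longrightarrow> u \<in> carrier P \<Longrightarrow> t \<in> carrier P \<Longrightarrow>
   a \<oplus>\<^bsub>P\<^esub> q \<oplus>\<^bsub>P\<^esub> u \<oplus>\<^bsub>P\<^esub> t = (a \<oplus>\<^bsub>P\<^esub> t) \<oplus>\<^bsub>P\<^esub> q \<oplus>\<^bsub>P\<^esub> u"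
  by algebra

lemma rearr2: "a \<in> carrier P \<Longrightarrow> q \<in> carrier P \<Longrightarrow> u \<in> carrier P \<Longrightarrow> t \<in> carrier P \<Longrightarrow>
   a \<oplus>\<^bsub>P\<^esub> q \<oplus>\<^bsub>P\<^esub> u \<oplus>\<^bsub>P\<^esub> t = a \<oplus>\<^bsub>P\<^esub> (q \<oplus>\<^bsub>P\<^esub> t) \<oplus>\<^bsub>P\<^esub> u"
  by algebra

lemma reduce:
  assumes E: "E > 0" "\<forall>e\<ge>E. e mod deg R g \<notin> Cs \<longrightarrow> (\<exists>a\<in>A. a \<noteq> \<zero>\<^bsub>P\<^esub> \<and> deg R a = e)"
  shows "w \<in> carrier P \<Longrightarrow> \<exists>a\<in>A. \<exists>q\<in>Q. \<exists>u. u \<in> carrier P \<and> deg R u < E \<and> w = a \<oplus>\<^bsub>P\<^esub> q \<oplus>\<^bsub>P\<^esub> u"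
proof (induct "deg R w" arbitrary: w rule: less_induct)
  case (less w)
  show ?case
  proof (cases "deg R w < E")
    case True
    then show ?thesis using less.prems A_zero Q_zero by (intro bexI[of _ "\<zero>\<^bsub>P\<^esub>"] exI[of _ w]) auto
  next
    case False
    let ?e = "deg R w" and ?d = "deg R g"
    have epos: "?e \<noteq> 0" using False E by auto
    have wc: "w \<in> carrier P" by (rule less.prems)
    have lw: "UnivPoly.coeff P w ?e \<in> carrier R" using wc by simp
    obtain t where t: "t \<in> carrier P" "deg R t \<le> ?e" "UnivPoly.coeff P t ?e = UnivPoly.coeff P w ?e"
      and tAQ: "t \<in> A \<or> t \<in> Q"
    proof (cases "?e mod ?d \<in> Cs")
      case True
      define t0 where "t0 = g [^]\<^bsub>P\<^esub> (?e div ?d) \<otimes>\<^bsub>P\<^esub> UnivPoly.monom P \<one> (?e mod ?d)"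
      have t0Q: "t0 \<in> Q" unfolding t0_def by (intro Q_gpow Q_monom True) simp
      have mc: "UnivPoly.monom P \<one> (?e mod ?d) \<in> carrier P" by simp
      have mnz: "UnivPoly.monom P \<one> (?e mod ?d) \<noteq> \<zero>\<^bsub>P\<^esub>"
      proof
        assume "UnivPoly.monom P \<one> (?e mod ?d) = \<zero>\<^bsub>P\<^esub>"
        then have "UnivPoly.coeff P (UnivPoly.monom P \<one> (?e mod ?d)) (?e mod ?d) = \<zero>" by simp
        then show False by simp
      qed
      have t0c: "t0 \<in> carrier P" using t0Q Q_carr by auto
      have t0nz: "t0 \<noteq> \<zero>\<^bsub>P\<^esub>" unfolding t0_def using mnz mc gpow_nz gpow_carr by (simp add: Pint)
      have dt0: "deg R t0 = ?e" unfolding t0_def using mnz mc gpow_nz gpow_carr gpow_deg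
          div_mult_mod_eq[of "deg R w" "deg R g"] by simp
      obtain n :: nat where n: "UnivPoly.coeff P ([n] \<cdot>\<^bsub>P\<^esub> t0) (deg R t0) = UnivPoly.coeff P w ?e"
        "deg R ([n] \<cdot>\<^bsub>P\<^esub> t0) \<le> deg R t0" using scale_lead[OF t0c t0nz lw] by blast
      have "[n] \<cdot>\<^bsub>P\<^esub> t0 \<in> Q" using Q_zero Q_add t0Q by (rule add_pow_set)
      then show ?thesis using that[of "[n] \<cdot>\<^bsub>P\<^esub> t0"] n dt0 Q_carr by auto
    next
      case False
      obtain a0 where a0: "a0 \<in> A" "a0 \<noteq> \<zero>\<^bsub>P\<^esub>" "deg R a0 = ?e" using E(2) \<open>\<not> ?e < E\<close> False not_less by blast
      have a0c: "a0 \<in> carrier P" using a0 A_carr by auto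
      obtain n :: nat where n: "UnivPoly.coeff P ([n] \<cdot>\<^bsub>P\<^esub> a0) (deg R a0) = UnivPoly.coeff P w ?e"
        "deg R ([n] \<cdot>\<^bsub>P\<^esub> a0) \<le> deg R a0" using scale_lead[OF a0c a0(2) lw] by blast
      have "[n] \<cdot>\<^bsub>P\<^esub> a0 \<in> A" using A_zero A_add a0(1) by (rule add_pow_set)
      then show ?thesis using that[of "[n] \<cdot>\<^bsub>P\<^esub> a0"] n a0 A_carr by auto
    qed
    define w' where "w' = w \<ominus>\<^bsub>P\<^esub> t"
    have w'c: "w' \<in> carrier P" using wc t by (simp add: w'_def)
    have "deg R (w \<oplus>\<^bsub>P\<^esub> \<ominus>\<^bsub>P\<^esub> t) < ?e"
      using wc t epos by (intro deg_lcoeff_cancel) auto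
    hence dw: "deg R w' < ?e" by (simp add: w'_def P.minus_eq)
    obtain a q u where aqu: "a \<in> A" "q \<in> Q" "u \<in> carrier P" "deg R u < E" "w' = a \<oplus>\<^bsub>P\<^esub> q \<oplus>\<^bsub>P\<^esub> u"
      using less.hyps[OF dw w'c] by blast
    have weq: "w = w' \<oplus>\<^bsub>P\<^esub> t" unfolding w'_def using wc t(1) by algebra
    show ?thesis using tAQ
    proof
      assume tA: "t \<in> A"
      have "w = (a \<oplus>\<^bsub>P\<^esub> t) \<oplus>\<^bsub>P\<^esub> q \<oplus>\<^bsub>P\<^esub> u"
        unfolding weq aqu(5) using aqu t(1) A_carr Q_carr by (intro rearr1) auto
      then show ?thesis using A_add[OF aqu(1) tA] aqu by blast
    next
      assume tQ: "t \<in> Q"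
      have "w = a \<oplus>\<^bsub>P\<^esub> (q \<oplus>\<^bsub>P\<^esub> t) \<oplus>\<^bsub>P\<^esub> u"
        unfolding weq aqu(5) using aqu t(1) A_carr Q_carr by (intro rearr2) auto
      then show ?thesis using Q_add[OF aqu(2) tQ] aqu by blast
    qed
  qed
qed

lemma rearr3: "a1 \<in> carrier P \<Longrightarrow> q1 \<in> carrier P \<Longrightarrow> a2 \<in> carrier P \<Longrightarrow> q2 \<in> carrier P \<Longrightarrow> v \<in> carrier P \<Longrightarrow>
   (a1 \<oplus>\<^bsub>P\<^esub> q1 \<oplus>\<^bsub>P\<^esub> v) \<ominus>\<^bsub>P\<^esub> (a2 \<oplus>\<^bsub>P\<^esub> q2 \<oplus>\<^bsub>P\<^esub> v) = (a1 \<ominus>\<^bsub>P\<^esub> a2) \<oplus>\<^bsub>P\<^esub> (q1 \<ominus>\<^bsub>P\<^esub> q2)"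
  by algebra

lemma rearr4: "h \<in> carrier P \<Longrightarrow> a \<in> carrier P \<Longrightarrow> q \<in> carrier P \<Longrightarrow> u \<in> carrier P \<Longrightarrow>
   a' \<in> carrier P \<Longrightarrow> q' \<in> carrier P \<Longrightarrow> h \<otimes>\<^bsub>P\<^esub> u = a' \<oplus>\<^bsub>P\<^esub> q' \<Longrightarrow>
   h \<otimes>\<^bsub>P\<^esub> (a \<oplus>\<^bsub>P\<^esub> q \<oplus>\<^bsub>P\<^esub> u) = (h \<otimes>\<^bsub>P\<^esub> a \<oplus>\<^bsub>P\<^esub> a') \<oplus>\<^bsub>P\<^esub> (h \<otimes>\<^bsub>P\<^esub> q \<oplus>\<^bsub>P\<^esub> q')"
proof -
  assume c: "h \<in> carrier P" "a \<in> carrier P" "q \<in> carrier P" "u \<in> carrier P" "a' \<in> carrier P" "q' \<in> carrier P"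
    and e: "h \<otimes>\<^bsub>P\<^esub> u = a' \<oplus>\<^bsub>P\<^esub> q'"
  have "h \<otimes>\<^bsub>P\<^esub> (a \<oplus>\<^bsub>P\<^esub> q \<oplus>\<^bsub>P\<^esub> u) = h \<otimes>\<^bsub>P\<^esub> a \<oplus>\<^bsub>P\<^esub> h \<otimes>\<^bsub>P\<^esub> q \<oplus>\<^bsub>P\<^esub> h \<otimes>\<^bsub>P\<^esub> u"
    using c by algebra
  also have "\<dots> = h \<otimes>\<^bsub>P\<^esub> a \<oplus>\<^bsub>P\<^esub> h \<otimes>\<^bsub>P\<^esub> q \<oplus>\<^bsub>P\<^esub> (a' \<oplus>\<^bsub>P\<^esub> q')" using e by simp
  also have "\<dots> = (h \<otimes>\<^bsub>P\<^esub> a \<oplus>\<^bsub>P\<^esub> a') \<oplus>\<^bsub>P\<^esub> (h \<otimes>\<^bsub>P\<^esub> q \<oplus>\<^bsub>P\<^esub> q')" using c by algebra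
  finally show ?thesis .
qed

lemma diff_mult: "x \<in> carrier P \<Longrightarrow> y \<in> carrier P \<Longrightarrow> m \<in> carrier P \<Longrightarrow>
   (x \<ominus>\<^bsub>P\<^esub> y) \<otimes>\<^bsub>P\<^esub> m = x \<otimes>\<^bsub>P\<^esub> m \<ominus>\<^bsub>P\<^esub> y \<otimes>\<^bsub>P\<^esub> m"
  by algebra

lemma pigeon:
  assumes E: "E > 0" "\<forall>e\<ge>E. e mod deg R g \<notin> Cs \<longrightarrow> (\<exists>a\<in>A. a \<noteq> \<zero>\<^bsub>P\<^esub> \<and> deg R a = e)"
  shows "\<exists>j j'::nat. j < j' \<and> (\<forall>m\<in>carrier P. \<exists>a\<in>A. \<exists>q\<in>Q.
            (g [^]\<^bsub>P\<^esub> j' \<ominus>\<^bsub>P\<^esub> g [^]\<^bsub>P\<^esub> j) \<otimes>\<^bsub>P\<^esub> m = a \<oplus>\<^bsub>P\<^esub> q)"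
proof -
  let ?L = "{u \<in> carrier P. deg R u \<le> E}"
  define rep where "rep w = (SOME u. u \<in> carrier P \<and> deg R u < E \<and> (\<exists>a\<in>A. \<exists>q\<in>Q. w = a \<oplus>\<^bsub>P\<^esub> q \<oplus>\<^bsub>P\<^esub> u))" for w
  have rep: "rep w \<in> carrier P \<and> deg R (rep w) < E \<and> (\<exists>a\<in>A. \<exists>q\<in>Q. w = a \<oplus>\<^bsub>P\<^esub> q \<oplus>\<^bsub>P\<^esub> rep w)"
    if "w \<in> carrier P" for w
  proof -
    have "\<exists>u. u \<in> carrier P \<and> deg R u < E \<and> (\<exists>a\<in>A. \<exists>q\<in>Q. w = a \<oplus>\<^bsub>P\<^esub> q \<oplus>\<^bsub>P\<^esub> u)"
      using reduce[OF E that] by blast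
    then show ?thesis unfolding rep_def by (rule someI_ex)
  qed
  define \<Phi> where "\<Phi> j = (\<lambda>u\<in>?L. rep (g [^]\<^bsub>P\<^esub> (j::nat) \<otimes>\<^bsub>P\<^esub> u))" for j
  have "\<Phi> ` UNIV \<subseteq> PiE ?L (\<lambda>_. ?L)"
  proof
    fix x assume "x \<in> \<Phi> ` UNIV"
    then obtain j where x: "x = \<Phi> j" by auto
    have "rep (g [^]\<^bsub>P\<^esub> j \<otimes>\<^bsub>P\<^esub> u) \<in> ?L" if "u \<in> ?L" for u
      using rep[of "g [^]\<^bsub>P\<^esub> j \<otimes>\<^bsub>P\<^esub> u"] that gpow_carr by auto
    then show "x \<in> PiE ?L (\<lambda>_. ?L)" unfolding x \<Phi>_def by auto
  qed
  moreover have "finite (PiE ?L (\<lambda>_. ?L))" using low_finite by (simp add: finite_PiE)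
  ultimately have "finite (\<Phi> ` UNIV)" by (rule finite_subset)
  hence "\<not> inj \<Phi>" using finite_imageD infinite_UNIV_nat by blast
  then obtain j1 j2 where j12: "j1 \<noteq> j2" "\<Phi> j1 = \<Phi> j2" unfolding inj_def by blast
  obtain j j' where jj: "j < j'" "\<Phi> j = \<Phi> j'"
  proof (cases "j1 < j2")
    case True then show ?thesis using that j12 by blast
  next
    case False then have "j2 < j1" using j12 by simp
    then show ?thesis using that j12 by metis
  qed
  let ?h = "g [^]\<^bsub>P\<^esub> j' \<ominus>\<^bsub>P\<^esub> g [^]\<^bsub>P\<^esub> j"
  have hc: "?h \<in> carrier P" using gpow_carr by simp
  have low: "\<exists>a\<in>A. \<exists>q\<in>Q. ?h \<otimes>\<^bsub>P\<^esub> u = a \<oplus>\<^bsub>P\<^esub> q" if u: "u \<in> carrier P" "deg R u < E" for u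
  proof -
    have uL: "u \<in> ?L" using u by simp
    have same: "rep (g [^]\<^bsub>P\<^esub> j \<otimes>\<^bsub>P\<^esub> u) = rep (g [^]\<^bsub>P\<^esub> j' \<otimes>\<^bsub>P\<^esub> u)"
      using fun_cong[OF jj(2), of u] uL unfolding \<Phi>_def by simp
    obtain a1 q1 where 1: "a1 \<in> A" "q1 \<in> Q" "g [^]\<^bsub>P\<^esub> j' \<otimes>\<^bsub>P\<^esub> u = a1 \<oplus>\<^bsub>P\<^esub> q1 \<oplus>\<^bsub>P\<^esub> rep (g [^]\<^bsub>P\<^esub> j' \<otimes>\<^bsub>P\<^esub> u)"
      using rep[of "g [^]\<^bsub>P\<^esub> j' \<otimes>\<^bsub>P\<^esub> u"] gpow_carr u by auto
    obtain a2 q2 where 2: "a2 \<in> A" "q2 \<in> Q" "g [^]\<^bsub>P\<^esub> j \<otimes>\<^bsub>P\<^esub> u = a2 \<oplus>\<^bsub>P\<^esub> q2 \<oplus>\<^bsub>P\<^esub> rep (g [^]\<^bsub>P\<^esub> j' \<otimes>\<^bsub>P\<^esub> u)"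
      using rep[of "g [^]\<^bsub>P\<^esub> j \<otimes>\<^bsub>P\<^esub> u"] gpow_carr u same by auto
    have vc: "rep (g [^]\<^bsub>P\<^esub> j' \<otimes>\<^bsub>P\<^esub> u) \<in> carrier P" using rep gpow_carr u by auto
    obtain v where vdef: "v = rep (g [^]\<^bsub>P\<^esub> j' \<otimes>\<^bsub>P\<^esub> u)" by blast
    note e1 = 1(3)[folded vdef] and e2 = 2(3)[folded vdef] and vc' = vc[folded vdef]
    have "?h \<otimes>\<^bsub>P\<^esub> u = g [^]\<^bsub>P\<^esub> j' \<otimes>\<^bsub>P\<^esub> u \<ominus>\<^bsub>P\<^esub> g [^]\<^bsub>P\<^esub> j \<otimes>\<^bsub>P\<^esub> u"
      using gpow_carr u by (simp add: diff_mult)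
    also have "\<dots> = (a1 \<ominus>\<^bsub>P\<^esub> a2) \<oplus>\<^bsub>P\<^esub> (q1 \<ominus>\<^bsub>P\<^esub> q2)"
      unfolding e1 e2 using 1(1,2) 2(1,2) vc' A_carr Q_carr by (intro rearr3) auto
    finally show ?thesis using A_minus[OF 1(1) 2(1)] Q_minus[OF 1(2) 2(2)] by blast
  qed
  have "\<forall>m\<in>carrier P. \<exists>a\<in>A. \<exists>q\<in>Q. ?h \<otimes>\<^bsub>P\<^esub> m = a \<oplus>\<^bsub>P\<^esub> q"
  proof
    fix m assume m: "m \<in> carrier P"
    obtain a q u where aqu: "a \<in> A" "q \<in> Q" "u \<in> carrier P" "deg R u < E" "m = a \<oplus>\<^bsub>P\<^esub> q \<oplus>\<^bsub>P\<^esub> u"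
      using reduce[OF E m] by blast
    obtain a' q' where aq': "a' \<in> A" "q' \<in> Q" "?h \<otimes>\<^bsub>P\<^esub> u = a' \<oplus>\<^bsub>P\<^esub> q'" using low[OF aqu(3,4)] by blast
    have ha: "?h \<otimes>\<^bsub>P\<^esub> a \<in> A"
    proof -
      have "?h \<otimes>\<^bsub>P\<^esub> a = g [^]\<^bsub>P\<^esub> j' \<otimes>\<^bsub>P\<^esub> a \<ominus>\<^bsub>P\<^esub> g [^]\<^bsub>P\<^esub> j \<otimes>\<^bsub>P\<^esub> a"
        using gpow_carr aqu A_carr by (simp add: diff_mult)
      then show ?thesis using A_minus gpow_A aqu by simp
    qed
    have hq: "?h \<otimes>\<^bsub>P\<^esub> q \<in> Q"
    proof -
      have "?h \<otimes>\<^bsub>P\<^esub> q = g [^]\<^bsub>P\<^esub> j' \<otimes>\<^bsub>P\<^esub> q \<ominus>\<^bsub>P\<^esub> g [^]\<^bsub>P\<^esub> j \<otimes>\<^bsub>P\<^esub> q"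
        using gpow_carr aqu Q_carr by (simp add: diff_mult)
      then show ?thesis using Q_minus Q_gpow aqu by simp
    qed
    have "?h \<otimes>\<^bsub>P\<^esub> m = (?h \<otimes>\<^bsub>P\<^esub> a \<oplus>\<^bsub>P\<^esub> a') \<oplus>\<^bsub>P\<^esub> (?h \<otimes>\<^bsub>P\<^esub> q \<oplus>\<^bsub>P\<^esub> q')"
      unfolding aqu(5) using hc aqu aq' A_carr Q_carr by (intro rearr4) auto
    then show "\<exists>a\<in>A. \<exists>q\<in>Q. ?h \<otimes>\<^bsub>P\<^esub> m = a \<oplus>\<^bsub>P\<^esub> q"
      using A_add[OF ha aq'(1)] Q_add[OF hq aq'(2)] by blast
  qed
  then show ?thesis using jj by blast
qed

lemma core_g:
  assumes r: "r \<in> carrier P" and rA: "r \<notin> A"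
  shows "\<exists>f\<in>carrier P. f \<noteq> \<zero>\<^bsub>P\<^esub> \<and> (\<forall>a\<in>A. \<forall>m\<in>carrier P. r \<noteq> a \<oplus>\<^bsub>P\<^esub> f \<otimes>\<^bsub>P\<^esub> m)"
proof -
  let ?d = "deg R g"
  obtain E where E: "E > 0" "\<forall>e\<ge>E. e mod deg R g \<notin> Cs \<longrightarrow> (\<exists>a\<in>A. a \<noteq> \<zero>\<^bsub>P\<^esub> \<and> deg R a = e)"
    using threshold by blast
  obtain j j' :: nat where jj: "j < j'" and hm: "\<forall>m\<in>carrier P. \<exists>a\<in>A. \<exists>q\<in>Q.
            (g [^]\<^bsub>P\<^esub> j' \<ominus>\<^bsub>P\<^esub> g [^]\<^bsub>P\<^esub> j) \<otimes>\<^bsub>P\<^esub> m = a \<oplus>\<^bsub>P\<^esub> q"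
    using pigeon[OF E] by blast
  define h where "h = g [^]\<^bsub>P\<^esub> j' \<ominus>\<^bsub>P\<^esub> g [^]\<^bsub>P\<^esub> j"
  have hc: "h \<in> carrier P" unfolding h_def using gpow_carr by simp
  have hnz: "h \<noteq> \<zero>\<^bsub>P\<^esub>"
  proof
    assume "h = \<zero>\<^bsub>P\<^esub>"
    then have "g [^]\<^bsub>P\<^esub> j' = g [^]\<^bsub>P\<^esub> j" unfolding h_def using gpow_carr P.r_right_minus_eq by blast
    then have "deg R (g [^]\<^bsub>P\<^esub> j') = deg R (g [^]\<^bsub>P\<^esub> j)" by simp
    then have "j' * ?d = j * ?d" by (simp only: gpow_deg)
    then show False using jj dpos by simp
  qed
  define n where "n = Suc (deg R r)"
  define f where "f = g [^]\<^bsub>P\<^esub> n \<otimes>\<^bsub>P\<^esub> h"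
  have fc: "f \<in> carrier P" unfolding f_def using hc gpow_carr by simp
  have fnz: "f \<noteq> \<zero>\<^bsub>P\<^esub>" unfolding f_def using hc hnz gpow_carr gpow_nz by (simp add: Pint)
  have "r \<noteq> a \<oplus>\<^bsub>P\<^esub> f \<otimes>\<^bsub>P\<^esub> m" if a: "a \<in> A" and m: "m \<in> carrier P" for a m
  proof
    assume eq: "r = a \<oplus>\<^bsub>P\<^esub> f \<otimes>\<^bsub>P\<^esub> m"
    have ac: "a \<in> carrier P" using a A_carr by auto
    obtain a' q' where aq': "a' \<in> A" "q' \<in> Q" "h \<otimes>\<^bsub>P\<^esub> m = a' \<oplus>\<^bsub>P\<^esub> q'"
      using hm m unfolding h_def[symmetric] by blast
    have a'c: "a' \<in> carrier P" using aq' A_carr by auto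
    have q'c: "q' \<in> carrier P" using aq' Q_carr by auto
    have gnc: "g [^]\<^bsub>P\<^esub> n \<in> carrier P" by (rule gpow_carr)
    have "f \<otimes>\<^bsub>P\<^esub> m = g [^]\<^bsub>P\<^esub> n \<otimes>\<^bsub>P\<^esub> (h \<otimes>\<^bsub>P\<^esub> m)" unfolding f_def using gnc hc m by (simp add: P.m_assoc)
    also have "\<dots> = g [^]\<^bsub>P\<^esub> n \<otimes>\<^bsub>P\<^esub> a' \<oplus>\<^bsub>P\<^esub> g [^]\<^bsub>P\<^esub> n \<otimes>\<^bsub>P\<^esub> q'"
      unfolding aq'(3) using gnc a'c q'c by (simp add: P.r_distr)
    finally have fm: "f \<otimes>\<^bsub>P\<^esub> m = g [^]\<^bsub>P\<^esub> n \<otimes>\<^bsub>P\<^esub> a' \<oplus>\<^bsub>P\<^esub> g [^]\<^bsub>P\<^esub> n \<otimes>\<^bsub>P\<^esub> q'" .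
    define a2 where "a2 = a \<oplus>\<^bsub>P\<^esub> g [^]\<^bsub>P\<^esub> n \<otimes>\<^bsub>P\<^esub> a'"
    define q2 where "q2 = g [^]\<^bsub>P\<^esub> n \<otimes>\<^bsub>P\<^esub> q'"
    have a2A: "a2 \<in> A" unfolding a2_def using a aq'(1) gpow_A A_add by simp
    have q2Q: "q2 \<in> Q" unfolding q2_def using aq'(2) Q_gpow by simp
    have a2c: "a2 \<in> carrier P" using a2A A_carr by auto
    have q2c: "q2 \<in> carrier P" using q2Q Q_carr by auto
    have req: "r = a2 \<oplus>\<^bsub>P\<^esub> q2" unfolding eq fm a2_def q2_def using ac a'c q'c gnc
      by (simp add: P.a_assoc)
    have q2nz: "q2 \<noteq> \<zero>\<^bsub>P\<^esub>"
    proof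
      assume "q2 = \<zero>\<^bsub>P\<^esub>"
      then have "r = a2" using req a2c by simp
      then show False using rA a2A by simp
    qed
    have q'nz: "q' \<noteq> \<zero>\<^bsub>P\<^esub>" using q2nz gnc unfolding q2_def by auto
    have dq2: "deg R q2 = n * ?d + deg R q'" unfolding q2_def using gnc q'c q'nz gpow_nz gpow_deg by simp
    have "n \<le> n * ?d" using dpos by simp
    hence lt: "deg R r < deg R q2" using dq2 unfolding n_def by linarith
    have a2eq: "a2 = r \<oplus>\<^bsub>P\<^esub> \<ominus>\<^bsub>P\<^esub> q2" using req a2c q2c by algebra
    have da2: "deg R a2 = deg R q2"
      unfolding a2eq using r q2c lt by (subst deg_add_less) auto
    have a2nz: "a2 \<noteq> \<zero>\<^bsub>P\<^esub>" using da2 lt by auto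
    have "deg R q2 mod ?d \<in> Cs" using Q_deg q2Q q2nz by blast
    then show False using a2A a2nz da2 unfolding Cs_def by auto
  qed
  then show ?thesis using fc fnz by blast
qed

end

context fsep
begin

lemma core:
  assumes r: "r \<in> carrier P" and A: "nonunital_subring A P" and rA: "r \<notin> A"
  shows "\<exists>f\<in>carrier P. f \<noteq> \<zero>\<^bsub>P\<^esub> \<and> (\<forall>a\<in>A. \<forall>m\<in>carrier P. r \<noteq> a \<oplus>\<^bsub>P\<^esub> f \<otimes>\<^bsub>P\<^esub> m)"
proof (cases "\<exists>g\<in>A. 0 < deg R g")
  case True
  then obtain g where g: "g \<in> A" "0 < deg R g" by blast
  interpret G: fsep_g R P A g by (intro fsep_g.intro fsep_axioms fsep_g_axioms.intro g) (use A P_def in simp_all)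
  show ?thesis by (rule G.core_g[OF r rA])
next
  case False
  have AP: "A \<subseteq> carrier P" using A unfolding nonunital_subring_def by auto
  have d0: "deg R a = 0" if "a \<in> A" for a using False that by auto
  define f where "f = UnivPoly.monom P \<one> (Suc (deg R r))"
  have fc: "f \<in> carrier P" unfolding f_def by simp
  have fnz: "f \<noteq> \<zero>\<^bsub>P\<^esub>"
  proof
    assume "f = \<zero>\<^bsub>P\<^esub>"
    then have "UnivPoly.coeff P f (Suc (deg R r)) = \<zero>" by simp
    then show False unfolding f_def by simp
  qed
  have df: "deg R f = Suc (deg R r)" unfolding f_def by simp
  have "r \<noteq> a \<oplus>\<^bsub>P\<^esub> f \<otimes>\<^bsub>P\<^esub> m" if a: "a \<in> A" and m: "m \<in> carrier P" for a m
  proof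
    assume eq: "r = a \<oplus>\<^bsub>P\<^esub> f \<otimes>\<^bsub>P\<^esub> m"
    have ac: "a \<in> carrier P" using a AP by auto
    show False
    proof (cases "m = \<zero>\<^bsub>P\<^esub>")
      case True
      then have "r = a" using eq ac fc by simp
      then show False using rA a by simp
    next
      case False
      have dfm: "deg R (f \<otimes>\<^bsub>P\<^esub> m) = Suc (deg R r) + deg R m" using fc fnz m False df by simp
      have "f \<otimes>\<^bsub>P\<^esub> m = r \<oplus>\<^bsub>P\<^esub> \<ominus>\<^bsub>P\<^esub> a" using eq ac fc m by algebra
      moreover have "deg R (r \<oplus>\<^bsub>P\<^esub> \<ominus>\<^bsub>P\<^esub> a) \<le> deg R r"
        using deg_add[OF r, of "\<ominus>\<^bsub>P\<^esub> a"] ac d0[OF a] by simp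
      ultimately show False using dfm by simp
    qed
  qed
  then show ?thesis using fc fnz by blast
qed

end



lemma resid_fsep:
  fixes p :: int
  assumes "Factorial_Ring.prime p"
  shows "fsep (residue_ring p)"
proof -
  have pp: "Factorial_Ring.prime (nat p)" using assms prime_ge_0_int[OF assms] by (metis int_nat_eq prime_nat_int_transfer)
  have p0: "p > 1" using assms prime_gt_1_int by blast
  interpret RP: residues_prime "nat p" "residue_ring p"
    by unfold_locales (use pp p0 in \<open>simp_all\<close>)
  have ap: "[n] \<cdot>\<^bsub>residue_ring p\<^esub> \<one>\<^bsub>residue_ring p\<^esub> = int n mod p" for n
  proof (induct n)
    case 0 then show ?case by (simp add: RP.res_zero_eq)
  next
    case (Suc n)
    have "[Suc n] \<cdot>\<^bsub>residue_ring p\<^esub> \<one>\<^bsub>residue_ring p\<^esub> = [n] \<cdot>\<^bsub>residue_ring p\<^esub> \<one>\<^bsub>residue_ring p\<^esub> \<oplus>\<^bsub>residue_ring p\<^esub> \<one>\<^bsub>residue_ring p\<^esub>"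
      by (simp add: RP.add.nat_pow_Suc)
    also have "\<dots> = (int n mod p + 1) mod p" using Suc p0 by (simp add: RP.res_add_eq RP.res_one_eq)
    also have "\<dots> = int (Suc n) mod p" by (metis mod_add_left_eq of_nat_Suc add.commute)
    finally show ?case .
  qed
  have fld: "field (residue_ring p)" using RP.is_field by simp
  have prim: "\<exists>n::nat. x = [n] \<cdot>\<^bsub>residue_ring p\<^esub> \<one>\<^bsub>residue_ring p\<^esub>"
    if "x \<in> carrier (residue_ring p)" for x
  proof -
    have x: "0 \<le> x" "x < p" using that p0 by (auto simp: RP.res_carrier_eq split: if_splits)
    show ?thesis using x by (intro exI[of _ "nat x"]) (simp add: ap)
  qed
  show ?thesis
    unfolding fsep_def fsep_axioms_def UP_domain_def
    using fld prim field.axioms(1) by auto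
qed


theorem proposition6:
  fixes p :: int
  assumes "Factorial_Ring.prime p"
  shows "finitely_separable (UP (residue_ring p))"
proof -
  interpret F: fsep "residue_ring p" "UP (residue_ring p)" by (rule resid_fsep[OF assms])
  show ?thesis unfolding finitely_separable_def
  proof (intro ballI allI impI)
    fix r A assume r: "r \<in> carrier (UP (residue_ring p))"
      and h: "nonunital_subring A (UP (residue_ring p)) \<and> r \<notin> A"
    have AP: "A \<subseteq> carrier (UP (residue_ring p))" using h unfolding nonunital_subring_def by auto
    obtain f where f: "f \<in> carrier (UP (residue_ring p))" "f \<noteq> \<zero>\<^bsub>UP (residue_ring p)\<^esub>"
      and nr: "\<forall>a\<in>A. \<forall>m\<in>carrier (UP (residue_ring p)). r \<noteq> a \<oplus>\<^bsub>UP (residue_ring p)\<^esub> f \<otimes>\<^bsub>UP (residue_ring p)\<^esub> m"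
      using F.core[OF r] h by blast
    show "\<exists>(F::nat ring) \<phi>. ring F \<and> finite (carrier F) \<and> \<phi> \<in> ring_hom (UP (residue_ring p)) F \<and>
            \<phi> r \<notin> \<phi> ` A"
      by (rule F.quot_sep[OF f r nr AP])
  qed
qed

end
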